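(* Suppose $G$ is an abelian complex reflection group, and let $T$ and $V$ be length-$n$ reflection factorizations which generate $G$, factor the same element of $G$, and have the same multiset of conjugacy classes. Then $T$ and $V$ are Hurwitz equivalent.
   Context: A complex reflection group is a finite group of linear transformations of a complex vector space generated by reflections (linear maps whose fixed space has codimension $1$). A reflection factorization of $g\in G$ of length $n$ is a tuple $(r_1,\dots,r_n)$ of reflections in $G$ with $r_1\cdots r_n=g$; it generates $\langle r_1,\dots,r_n\rangle$. The Hurwitz move $\sigma_i$ ($1\le i<n$) sends $(r_1,\dots,r_n)$ to $(r_1,\dots,r_{i-1},r_{i+1},r_{i+1}^{-1}r_ir_{i+1},r_{i+2},\dots,r_n)$; two factorizations are Hurwitz equivalent if one is obtained from the other by a finite sequence of Hurwitz moves. The multiset of conjugacy classes of a factorization generating $G$ is the multiset of $G$-conjugacy classes of its entries. *)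

theory Defs
  imports "HOL-Analysis.Analysis" "HOL-Library.Multiset"
begin

definition is_reflection :: "complex^'n^'n \<Rightarrow> bool" where
  "is_reflection r \<longleftrightarrow> invertible r \<and>
     vec.dim {v :: complex^'n. r *v v = v} = CARD('n) - 1"

inductive_set gen_group :: "(complex^'n^'n) set \<Rightarrow> (complex^'n^'n) set"
  for S where
  gen_one: "mat 1 \<in> gen_group S"
| gen_base: "s \<in> S \<Longrightarrow> s \<in> gen_group S"
| gen_mult: "a \<in> gen_group S \<Longrightarrow> b \<in> gen_group S \<Longrightarrow> a ** b \<in> gen_group S"
| gen_inv: "a \<in> gen_group S \<Longrightarrow> matrix_inv a \<in> gen_group S"

definition matrix_group :: "(complex^'n^'n) set \<Rightarrow> bool" where
  "matrix_group G \<longleftrightarrow> mat 1 \<in> G \<and> (\<forall>a\<in>G. invertible a) \<and>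
     (\<forall>a\<in>G. \<forall>b\<in>G. a ** b \<in> G) \<and> (\<forall>a\<in>G. matrix_inv a \<in> G)"

definition complex_reflection_group :: "(complex^'n^'n) set \<Rightarrow> bool" where
  "complex_reflection_group G \<longleftrightarrow> matrix_group G \<and> finite G \<and>
     G = gen_group {r \<in> G. is_reflection r}"

definition abelian_group :: "(complex^'n^'n) set \<Rightarrow> bool" where
  "abelian_group G \<longleftrightarrow> (\<forall>a\<in>G. \<forall>b\<in>G. a ** b = b ** a)"

definition list_prod :: "(complex^'n^'n) list \<Rightarrow> complex^'n^'n" where
  "list_prod rs = foldr (**) rs (mat 1)"

definition reflection_factorization ::
  "(complex^'n^'n) set \<Rightarrow> complex^'n^'n \<Rightarrow> (complex^'n^'n) list \<Rightarrow> bool" where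
  "reflection_factorization G g rs \<longleftrightarrow>
     (\<forall>r\<in>set rs. r \<in> G \<and> is_reflection r) \<and> list_prod rs = g"

definition generates :: "(complex^'n^'n) list \<Rightarrow> (complex^'n^'n) set \<Rightarrow> bool" where
  "generates rs G \<longleftrightarrow> gen_group (set rs) = G"

text \<open>Hurwitz move sigma_(i+1) (0-based index i, i + 1 < length rs).\<close>
definition hurwitz_move :: "nat \<Rightarrow> (complex^'n^'n) list \<Rightarrow> (complex^'n^'n) list" where
  "hurwitz_move i rs = rs[i := rs ! (i+1),
       i+1 := matrix_inv (rs ! (i+1)) ** (rs ! i) ** (rs ! (i+1))]"

definition hurwitz_step :: "(complex^'n^'n) list \<Rightarrow> (complex^'n^'n) list \<Rightarrow> bool" where
  "hurwitz_step rs rs' \<longleftrightarrow> (\<exists>i. i + 1 < length rs \<and> rs' = hurwitz_move i rs)"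

definition hurwitz_equivalent :: "(complex^'n^'n) list \<Rightarrow> (complex^'n^'n) list \<Rightarrow> bool" where
  "hurwitz_equivalent T V \<longleftrightarrow> hurwitz_step\<^sup>*\<^sup>* T V"

definition conj_class :: "(complex^'n^'n) set \<Rightarrow> complex^'n^'n \<Rightarrow> (complex^'n^'n) set" where
  "conj_class G x = {g ** x ** matrix_inv g | g. g \<in> G}"

definition class_multiset ::
  "(complex^'n^'n) set \<Rightarrow> (complex^'n^'n) list \<Rightarrow> (complex^'n^'n) set multiset" where
  "class_multiset G rs = mset (map (conj_class G) rs)"

end

theory Submission
  imports Defs
begin

lemma minv_props:
  fixes A :: "complex^'n^'n"
  assumes "invertible A"
  shows "A ** matrix_inv A = mat 1 \<and> matrix_inv A ** A = mat 1"
proof -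
  have "\<exists>A'. A ** A' = mat 1 \<and> A' ** A = mat 1" using assms unfolding invertible_def by blast
  then show ?thesis unfolding matrix_inv_def by (rule someI_ex)
qed

definition sw :: "'a list \<Rightarrow> 'a list \<Rightarrow> bool" where
  "sw xs ys \<longleftrightarrow> (\<exists>i. i + 1 < length xs \<and> ys = xs[i := xs ! (i+1), i+1 := xs ! i])"

lemma sw_cons: "sw xs ys \<Longrightarrow> sw (x#xs) (x#ys)"
proof -
  assume "sw xs ys"
  then obtain i where "i + 1 < length xs" "ys = xs[i := xs ! (i+1), i+1 := xs ! i]"
    unfolding sw_def by blast
  then show ?thesis unfolding sw_def by (intro exI[of _ "Suc i"]) simp
qed

lemma sw_cons_star: "sw\<^sup>*\<^sup>* xs ys \<Longrightarrow> sw\<^sup>*\<^sup>* (x#xs) (x#ys)"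
proof (induction rule: rtranclp_induct)
  case base then show ?case by (rule rtranclp.rtrancl_refl)
next
  case (step y z)
  show ?case by (rule rtranclp.rtrancl_into_rtrancl[OF step(3) sw_cons[OF step(2)]])
qed

lemma sw_bubble: "sw\<^sup>*\<^sup>* (a#us@vs) (us@a#vs)"
proof (induction us)
  case Nil then show ?case by simp
next
  case (Cons u us)
  have "sw (a#u#us@vs) (u#a#us@vs)"
    unfolding sw_def by (intro exI[of _ 0] conjI) auto
  moreover have "sw\<^sup>*\<^sup>* (u#a#us@vs) (u#us@a#vs)" by (rule sw_cons_star[OF Cons.IH])
  ultimately have "sw\<^sup>*\<^sup>* (a#u#us@vs) (u#us@a#vs)" by (rule converse_rtranclp_into_rtranclp)
  then show ?case by simp
qed

lemma sw_perm: "mset xs = mset ys \<Longrightarrow> sw\<^sup>*\<^sup>* xs ys"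
proof (induction xs arbitrary: ys)
  case Nil then have "ys = []" by simp
  then show ?case by simp
next
  case (Cons a xs)
  have "a \<in># mset ys" by (simp add: Cons.prems[symmetric])
  then have "a \<in> set ys" by simp
  then obtain us vs where ys: "ys = us @ a # vs" by (metis split_list)
  then have "mset xs = mset (us @ vs)" using Cons.prems by simp
  then have "sw\<^sup>*\<^sup>* xs (us@vs)" using Cons.IH by blast
  then have "sw\<^sup>*\<^sup>* (a#xs) (a#us@vs)" by (rule sw_cons_star)
  then show ?case unfolding ys by (rule rtranclp_trans[OF _ sw_bubble])
qed

lemma sw_mset: "sw xs ys \<Longrightarrow> mset ys = mset xs"
proof -
  assume "sw xs ys"
  then obtain i where i: "i + 1 < length xs" "ys = xs[i := xs ! (i+1), i+1 := xs ! i]"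
    unfolding sw_def by blast
  show ?thesis unfolding i(2) by (rule mset_swap) (use i(1) in simp_all)
qed

theorem proposition3p1:
  fixes G :: "(complex^'n^'n) set" and g :: "complex^'n^'n"
    and T V :: "(complex^'n^'n) list" and n :: nat
  assumes "complex_reflection_group G"
    and "abelian_group G"
    and "length T = n" and "length V = n"
    and "g \<in> G"
    and "reflection_factorization G g T" and "reflection_factorization G g V"
    and "generates T G" and "generates V G"
    and "class_multiset G T = class_multiset G V"
  shows "hurwitz_equivalent T V"
proof -
  have mg: "matrix_group G" using assms(1) unfolding complex_reflection_group_def by (rule conjunct1)
  have ab: "\<And>a b. a \<in> G \<Longrightarrow> b \<in> G \<Longrightarrow> a ** b = b ** a" using assms(2) unfolding abelian_group_def by blast
  have inv: "\<And>a. a \<in> G \<Longrightarrow> a ** matrix_inv a = mat 1 \<and> matrix_inv a ** a = mat 1"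
    using mg minv_props unfolding matrix_group_def by blast
  have one: "mat 1 \<in> G" using mg unfolding matrix_group_def by blast
  have cc: "conj_class G x = {x}" if x: "x \<in> G" for x
  proof -
    have c1: "h ** x ** matrix_inv h = x" if "h \<in> G" for h
    proof -
      have "h ** x ** matrix_inv h = x ** (h ** matrix_inv h)"
        using ab[OF that x] by (simp add: matrix_mul_assoc)
      then show ?thesis using inv[OF that] by simp
    qed
    have "mat 1 ** x ** matrix_inv (mat 1) = x" by (rule c1[OF one])
    then have "x \<in> conj_class G x" unfolding conj_class_def
      by (intro CollectI exI[of _ "mat 1"] conjI) (simp_all only: one)
    moreover have "conj_class G x \<subseteq> {x}" unfolding conj_class_def using c1 by blast
    ultimately show ?thesis by blast
  qed
  have TG: "set T \<subseteq> G" and VG: "set V \<subseteq> G"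
    using assms(6,7) unfolding reflection_factorization_def by auto
  have mT: "map (conj_class G) T = map (\<lambda>x. {x}) T"
    by (rule map_cong[OF refl]) (use TG cc in blast)
  have mV: "map (conj_class G) V = map (\<lambda>x. {x}) V"
    by (rule map_cong[OF refl]) (use VG cc in blast)
  have "mset (map (\<lambda>x. {x}) T) = mset (map (\<lambda>x. {x}) V)"
    using assms(10) mT mV unfolding class_multiset_def by simp
  then have "mset (map the_elem (map (\<lambda>x. {x}) T)) = mset (map the_elem (map (\<lambda>x. {x}) V))"
    by (simp only: mset_map)
  then have "mset T = mset V" by (simp add: comp_def)
  then have S: "sw\<^sup>*\<^sup>* T V" by (rule sw_perm)
  have "sw\<^sup>*\<^sup>* T W \<Longrightarrow> hurwitz_step\<^sup>*\<^sup>* T W \<and> set W \<subseteq> G" for W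
  proof (induction rule: rtranclp_induct)
    case base then show ?case using TG by simp
  next
    case (step y z)
    then obtain i where i: "i + 1 < length y" and z: "z = y[i := y ! (i+1), i+1 := y ! i]"
      unfolding sw_def by blast
    have yi: "y ! i \<in> G" and yi1: "y ! (i+1) \<in> G" using step(3) i by auto
    have "matrix_inv (y ! (i+1)) ** (y ! i) ** (y ! (i+1)) = matrix_inv (y ! (i+1)) ** (y ! (i+1)) ** (y ! i)"
      using ab[OF yi yi1] by (simp add: matrix_mul_assoc[symmetric])
    also have "\<dots> = y ! i" using inv[OF yi1] by simp
    finally have "hurwitz_move i y = z" unfolding hurwitz_move_def z by simp
    then have "hurwitz_step y z" unfolding hurwitz_step_def using i by blast
    moreover have "set z = set y" using sw_mset[OF step(2)] by (metis set_mset_mset)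
    ultimately show ?case using step(3) rtranclp.rtrancl_into_rtrancl[of hurwitz_step T y z] by simp
  qed
  then show ?thesis using S unfolding hurwitz_equivalent_def by blast
qed

end
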